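(* Let $k,l$ be positive integers, let $G$ be a $k$-degenerate graph and $H$ an $l$-degenerate graph. Then $AT(G+_R H)\le k+l+1$.
   Context: A graph is $k$-degenerate if its vertices can be successively deleted so that each deleted vertex has degree at most $k$ at the time of deletion. For an orientation $D$, a subdigraph is Eulerian if every vertex has equal in- and outdegree in it; $D$ is an AT-orientation if the numbers of Eulerian subgraphs with an even and with an odd number of arcs differ; $AT(G)$ is the smallest $k$ such that $G$ has an AT-orientation of maximum outdegree at most $k-1$. $R(G)$ has vertex set $V(G)\cup E(G)$ and consists of $G$ together with, for each edge $e=xy$, a new vertex $e$ adjacent to $x$ and $y$. $G+_R H$ has vertex set $(V(G)\cup E(G))\times V(H)$, with $(u_1,u_2)\sim(v_1,v_2)$ iff [$u_1=v_1\in V(G)$ and $u_2v_2\in E(H)$] or [$u_2=v_2$ and $u_1v_1\in E(R(G))$]. *)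

theory Defs
  imports Main
begin

definition simple_graph :: "'v set \<Rightarrow> 'v set set \<Rightarrow> bool" where
  "simple_graph V E \<longleftrightarrow> finite V \<and>
     (\<forall>e\<in>E. \<exists>x y. e = {x, y} \<and> x \<noteq> y \<and> x \<in> V \<and> y \<in> V)"

definition degenerate :: "nat \<Rightarrow> 'v set \<Rightarrow> 'v set set \<Rightarrow> bool" where
  "degenerate k V E \<longleftrightarrow> (\<exists>vs. distinct vs \<and> set vs = V \<and>
     (\<forall>i < length vs. card {u \<in> set (drop (Suc i) vs). {vs ! i, u} \<in> E} \<le> k))"

definition orientation :: "'v set \<Rightarrow> 'v set set \<Rightarrow> ('v \<times> 'v) set \<Rightarrow> bool" where
  "orientation V E D \<longleftrightarrow> D \<subseteq> {(x, y). {x, y} \<in> E} \<and>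
     (\<forall>x y. {x, y} \<in> E \<longrightarrow> ((x, y) \<in> D \<longleftrightarrow> (y, x) \<notin> D))"

definition outdeg :: "('v \<times> 'v) set \<Rightarrow> 'v \<Rightarrow> nat" where
  "outdeg D v = card {u. (v, u) \<in> D}"

definition indeg :: "('v \<times> 'v) set \<Rightarrow> 'v \<Rightarrow> nat" where
  "indeg D v = card {u. (u, v) \<in> D}"

definition eulerian_sub :: "'v set \<Rightarrow> ('v \<times> 'v) set \<Rightarrow> ('v \<times> 'v) set \<Rightarrow> bool" where
  "eulerian_sub V D S \<longleftrightarrow> S \<subseteq> D \<and> (\<forall>v\<in>V. indeg S v = outdeg S v)"

definition AT_orientation :: "'v set \<Rightarrow> 'v set set \<Rightarrow> ('v \<times> 'v) set \<Rightarrow> bool" where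
  "AT_orientation V E D \<longleftrightarrow> orientation V E D \<and>
     card {S. eulerian_sub V D S \<and> even (card S)} \<noteq>
     card {S. eulerian_sub V D S \<and> odd (card S)}"

text \<open>AT(G): least k with an AT-orientation of maximum outdegree at most k-1
(written as outdeg + 1 \<le> k to avoid truncated subtraction).\<close>
definition AT :: "'v set \<Rightarrow> 'v set set \<Rightarrow> nat" where
  "AT V E = (LEAST k. \<exists>D. AT_orientation V E D \<and> (\<forall>v\<in>V. outdeg D v + 1 \<le> k))"

definition R_verts :: "'a set \<Rightarrow> 'a set set \<Rightarrow> ('a + 'a set) set" where
  "R_verts V E = Inl ` V \<union> Inr ` E"

definition R_edges :: "'a set \<Rightarrow> 'a set set \<Rightarrow> ('a + 'a set) set set" where
  "R_edges V E = {{Inl x, Inl y} | x y. {x, y} \<in> E} \<union> {{Inr e, Inl x} | e x. e \<in> E \<and> x \<in> e}"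

definition plusR_verts :: "'a set \<Rightarrow> 'a set set \<Rightarrow> 'b set \<Rightarrow> (('a + 'a set) \<times> 'b) set" where
  "plusR_verts VG EG VH = R_verts VG EG \<times> VH"

definition plusR_edges :: "'a set \<Rightarrow> 'a set set \<Rightarrow> 'b set \<Rightarrow> 'b set set \<Rightarrow> (('a + 'a set) \<times> 'b) set set" where
  "plusR_edges VG EG VH EH =
     {{(u1, u2), (v1, v2)} | u1 u2 v1 v2.
        (u1, u2) \<in> plusR_verts VG EG VH \<and> (v1, v2) \<in> plusR_verts VG EG VH \<and>
        ((u1 = v1 \<and> u1 \<in> Inl ` VG \<and> {u2, v2} \<in> EH) \<or>
         (u2 = v2 \<and> {u1, v1} \<in> R_edges VG EG))}"

end

theory Submission
  imports Defs "HOL-Library.Product_Lexorder"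
begin

lemma sg_edge:
  assumes "simple_graph V E" "{x, y} \<in> E"
  shows "x \<in> V \<and> y \<in> V \<and> x \<noteq> y"
proof -
  obtain a b where "{x,y} = {a,b}" "a \<noteq> b" "a \<in> V" "b \<in> V"
    using assms unfolding simple_graph_def by blast
  then show ?thesis by (auto simp: doubleton_eq_iff)
qed

lemma AT_rank:
  fixes r :: "'v \<Rightarrow> 'c::linorder"
  assumes sg: "simple_graph V E"
    and ne: "\<And>x y. {x,y} \<in> E \<Longrightarrow> r x \<noteq> r y"
    and cnt: "\<And>v. v \<in> V \<Longrightarrow> card {u. {v,u} \<in> E \<and> r v < r u} \<le> d"
  shows "AT V E \<le> d + 1"
proof -
  define D where "D = {(x,y). {x,y} \<in> E \<and> r x < r y}"
  have finV: "finite V" using sg unfolding simple_graph_def by blast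
  have DV: "D \<subseteq> V \<times> V" using sg_edge[OF sg] unfolding D_def by blast
  have finD: "finite D" using DV finV by (meson finite_SigmaI finite_subset)
  have ori: "orientation V E D"
    unfolding orientation_def
  proof (intro conjI allI impI)
    show "D \<subseteq> {(x, y). {x, y} \<in> E}" unfolding D_def by blast
  next
    fix x y assume e: "{x,y} \<in> E"
    then have "{y,x} \<in> E" by (simp add: insert_commute)
    then show "((x, y) \<in> D) = ((y, x) \<notin> D)" using ne[OF e] e unfolding D_def
      by auto
  qed
  have eul: "S = {}" if "eulerian_sub V D S" for S
  proof (rule ccontr)
    assume Sne: "S \<noteq> {}"
    have SD: "S \<subseteq> D" and bal: "\<forall>v\<in>V. indeg S v = outdeg S v"
      using that unfolding eulerian_sub_def by auto
    have finS: "finite S" using SD finD finite_subset by blast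
    let ?T = "r ` fst ` S"
    have "finite ?T" "?T \<noteq> {}" using finS Sne by auto
    then have "Min ?T \<in> ?T" by (rule Min_in)
    then obtain x where xT: "x \<in> fst ` S" and rx: "r x = Min ?T" by (metis imageE)
    then obtain y where xy: "(x,y) \<in> S" by force
    then have "{x,y} \<in> E" using SD unfolding D_def by auto
    then have xV: "x \<in> V" using sg_edge[OF sg] by blast
    have "{u. (x,u) \<in> S} \<subseteq> snd ` S" by force
    then have "finite {u. (x,u) \<in> S}" using finS finite_subset by blast
    moreover have "y \<in> {u. (x,u) \<in> S}" using xy by simp
    ultimately have o: "outdeg S x > 0" unfolding outdeg_def
      by (metis card_gt_0_iff empty_iff)
    have "{u. (u,x) \<in> S} = {}"
    proof (rule ccontr)
      assume "{u. (u,x) \<in> S} \<noteq> {}"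
      then obtain u where us: "(u,x) \<in> S" by auto
      then have "r u < r x" using SD unfolding D_def by auto
      moreover have "r u \<in> ?T" using us by force
      ultimately show False using rx \<open>finite ?T\<close> Min_le by (metis not_le)
    qed
    then have "indeg S x = 0" unfolding indeg_def by simp
    then show False using o bal xV by simp
  qed
  have e0: "eulerian_sub V D {}" unfolding eulerian_sub_def indeg_def outdeg_def by simp
  have A: "{S. eulerian_sub V D S \<and> even (card S)} = {{}}"
  proof (intro set_eqI iffI)
    fix S assume "S \<in> {S. eulerian_sub V D S \<and> even (card S)}"
    then show "S \<in> {{}}" using eul by blast
  next
    fix S :: "('v \<times> 'v) set" assume "S \<in> {{}}"
    then show "S \<in> {S. eulerian_sub V D S \<and> even (card S)}" using e0 by simp
  qed
  have B: "{S. eulerian_sub V D S \<and> odd (card S)} = {}" using eul by (metis (mono_tags, lifting) card.empty empty_Collect_eq odd_pos not_gr0)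
  have AT: "AT_orientation V E D" unfolding AT_orientation_def A B using ori by simp
  have "\<forall>v\<in>V. outdeg D v + 1 \<le> d + 1"
  proof
    fix v assume "v \<in> V"
    have "{u. (v,u) \<in> D} = {u. {v,u} \<in> E \<and> r v < r u}" unfolding D_def by auto
    then show "outdeg D v + 1 \<le> d + 1" using cnt[OF \<open>v \<in> V\<close>] unfolding outdeg_def by simp
  qed
  then show ?thesis unfolding AT_def using AT by (intro Least_le) blast
qed

lemma deg_rank:
  assumes sg: "simple_graph V E" and dg: "degenerate d V E"
  shows "\<exists>r::'v\<Rightarrow>nat. inj_on r V \<and> (\<forall>v\<in>V. card {u. {v,u} \<in> E \<and> r v < r u} \<le> d)"
proof -
  obtain vs where dv: "distinct vs" and sv: "set vs = V"
    and c: "\<forall>i < length vs. card {u \<in> set (drop (Suc i) vs). {vs ! i, u} \<in> E} \<le> d"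
    using dg unfolding degenerate_def by blast
  define r where "r v = (THE i. i < length vs \<and> vs ! i = v)" for v
  have rv: "r v < length vs \<and> vs ! r v = v" if "v \<in> V" for v
    unfolding r_def using theI'[OF distinct_Ex1[OF dv, of v]] that sv by blast
  have runiq: "r (vs ! j) = j" if "j < length vs" for j
  proof -
    have "vs ! j \<in> V" using that sv nth_mem by blast
    then have "r (vs!j) < length vs" "vs ! r (vs!j) = vs ! j" using rv by auto
    then show ?thesis using nth_eq_iff_index_eq[OF dv] that by blast
  qed
  have inj: "inj_on r V" by (metis inj_onI rv)
  have "card {u. {v,u} \<in> E \<and> r v < r u} \<le> d" if vV: "v \<in> V" for v
  proof -
    let ?i = "r v"
    have "{u. {v,u} \<in> E \<and> r v < r u} = {u \<in> set (drop (Suc ?i) vs). {vs ! ?i, u} \<in> E}"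
    proof (intro set_eqI iffI)
      fix u assume u: "u \<in> {u. {v,u} \<in> E \<and> r v < r u}"
      then have uV: "u \<in> V" using sg_edge[OF sg] by blast
      have "drop (Suc ?i) vs ! (r u - Suc ?i) = u" using rv[OF uV] u by auto
      moreover have "r u - Suc ?i < length (drop (Suc ?i) vs)" using rv[OF uV] u by auto
      ultimately have "u \<in> set (drop (Suc ?i) vs)" by (metis nth_mem)
      then show "u \<in> {u \<in> set (drop (Suc ?i) vs). {vs ! ?i, u} \<in> E}"
        using u rv[OF vV] by simp
    next
      fix u assume u: "u \<in> {u \<in> set (drop (Suc ?i) vs). {vs ! ?i, u} \<in> E}"
      then obtain j where j: "j < length (drop (Suc ?i) vs)" "drop (Suc ?i) vs ! j = u"
        by (auto simp: in_set_conv_nth)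
      then have "vs ! (Suc ?i + j) = u" "Suc ?i + j < length vs" by auto
      then have "r u = Suc ?i + j" using runiq by metis
      then show "u \<in> {u. {v,u} \<in> E \<and> r v < r u}" using u rv[OF vV] by simp
    qed
    moreover have "card {u \<in> set (drop (Suc ?i) vs). {vs ! ?i, u} \<in> E} \<le> d"
      using c rv[OF vV] by blast
    ultimately show ?thesis by simp
  qed
  then show ?thesis using inj by blast
qed


lemma R_edges_iff:
  "{x,y} \<in> R_edges V E \<longleftrightarrow> (\<exists>a b. x = Inl a \<and> y = Inl b \<and> {a,b} \<in> E) \<or>
     (\<exists>e a. ((x = Inr e \<and> y = Inl a) \<or> (x = Inl a \<and> y = Inr e)) \<and> e \<in> E \<and> a \<in> e)"
proof
  assume "{x,y} \<in> R_edges V E"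
  then consider (a) a b where "{x,y} = {Inl a, Inl b}" "{a,b} \<in> E"
    | (b) e a where "{x,y} = {Inr e, Inl a}" "e \<in> E" "a \<in> e"
    unfolding R_edges_def by blast
  then show "(\<exists>a b. x = Inl a \<and> y = Inl b \<and> {a,b} \<in> E) \<or>
     (\<exists>e a. ((x = Inr e \<and> y = Inl a) \<or> (x = Inl a \<and> y = Inr e)) \<and> e \<in> E \<and> a \<in> e)"
  proof cases
    case a
    then have "(x = Inl a \<and> y = Inl b) \<or> (x = Inl b \<and> y = Inl a)" by (auto simp: doubleton_eq_iff)
    then show ?thesis using a(2) by (metis insert_commute)
  next
    case b
    then have "(x = Inr e \<and> y = Inl a) \<or> (x = Inl a \<and> y = Inr e)" by (auto simp: doubleton_eq_iff)
    then show ?thesis using b by blast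
  qed
next
  assume "(\<exists>a b. x = Inl a \<and> y = Inl b \<and> {a,b} \<in> E) \<or>
     (\<exists>e a. ((x = Inr e \<and> y = Inl a) \<or> (x = Inl a \<and> y = Inr e)) \<and> e \<in> E \<and> a \<in> e)"
  then show "{x,y} \<in> R_edges V E" unfolding R_edges_def by (auto simp: insert_commute)
qed

lemma PE_iff:
  "{p,q} \<in> plusR_edges VG EG VH EH \<longleftrightarrow> p \<in> plusR_verts VG EG VH \<and> q \<in> plusR_verts VG EG VH \<and>
     ((fst p = fst q \<and> fst p \<in> Inl ` VG \<and> {snd p, snd q} \<in> EH) \<or>
      (snd p = snd q \<and> {fst p, fst q} \<in> R_edges VG EG))"
proof
  assume "{p,q} \<in> plusR_edges VG EG VH EH"
  then obtain u1 u2 v1 v2 where eq: "{p,q} = {(u1,u2),(v1,v2)}"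
    and c: "(u1, u2) \<in> plusR_verts VG EG VH" "(v1, v2) \<in> plusR_verts VG EG VH"
           "(u1 = v1 \<and> u1 \<in> Inl ` VG \<and> {u2, v2} \<in> EH) \<or>
         (u2 = v2 \<and> {u1, v1} \<in> R_edges VG EG)"
    unfolding plusR_edges_def by blast
  from eq have "(p = (u1,u2) \<and> q = (v1,v2)) \<or> (p = (v1,v2) \<and> q = (u1,u2))"
    by (auto simp: doubleton_eq_iff)
  then show "p \<in> plusR_verts VG EG VH \<and> q \<in> plusR_verts VG EG VH \<and>
     ((fst p = fst q \<and> fst p \<in> Inl ` VG \<and> {snd p, snd q} \<in> EH) \<or>
      (snd p = snd q \<and> {fst p, fst q} \<in> R_edges VG EG))"
    using c by (auto simp: insert_commute)
next
  assume a: "p \<in> plusR_verts VG EG VH \<and> q \<in> plusR_verts VG EG VH \<and>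
     ((fst p = fst q \<and> fst p \<in> Inl ` VG \<and> {snd p, snd q} \<in> EH) \<or>
      (snd p = snd q \<and> {fst p, fst q} \<in> R_edges VG EG))"
  obtain u1 u2 v1 v2 where pq: "p = (u1,u2)" "q = (v1,v2)" by fastforce
  have "\<exists>a b c d. {p,q} = {(a,b),(c,d)} \<and> (a,b) \<in> plusR_verts VG EG VH \<and> (c,d) \<in> plusR_verts VG EG VH \<and>
        ((a = c \<and> a \<in> Inl ` VG \<and> {b, d} \<in> EH) \<or> (b = d \<and> {a, c} \<in> R_edges VG EG))"
    using a pq by (intro exI[of _ u1] exI[of _ u2] exI[of _ v1] exI[of _ v2]) simp
  then show "{p,q} \<in> plusR_edges VG EG VH EH" unfolding plusR_edges_def by blast
qed

theorem corollary3p6: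
  fixes VG :: "'a set" and EG :: "'a set set" and VH :: "'b set" and EH :: "'b set set"
    and k l :: nat
  assumes "k > 0" and "l > 0"
    and "simple_graph VG EG" and "simple_graph VH EH"
    and "degenerate k VG EG" and "degenerate l VH EH"
  shows "AT (plusR_verts VG EG VH) (plusR_edges VG EG VH EH) \<le> k + l + 1"
proof -
  note sgG = assms(3) and sgH = assms(4)
  let ?PV = "plusR_verts VG EG VH" and ?PE = "plusR_edges VG EG VH EH"
  obtain rG :: "'a \<Rightarrow> nat" where injG: "inj_on rG VG"
    and cG: "\<forall>v\<in>VG. card {u. {v,u} \<in> EG \<and> rG v < rG u} \<le> k"
    using deg_rank[OF sgG assms(5)] by blast
  obtain rH :: "'b \<Rightarrow> nat" where injH: "inj_on rH VH"
    and cH: "\<forall>v\<in>VH. card {u. {v,u} \<in> EH \<and> rH v < rH u} \<le> l"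
    using deg_rank[OF sgH assms(6)] by blast
  have finVG: "finite VG" and finVH: "finite VH"
    using sgG sgH unfolding simple_graph_def by auto
  have EGP: "EG \<subseteq> Pow VG"
  proof
    fix e assume "e \<in> EG"
    then obtain x y where "e = {x,y}" "x \<in> VG" "y \<in> VG" using sgG unfolding simple_graph_def by blast
    then show "e \<in> Pow VG" by simp
  qed
  have finEG: "finite EG" by (rule finite_subset[OF EGP]) (simp add: finVG)
  have finPV: "finite ?PV" unfolding plusR_verts_def R_verts_def
    using finVG finEG finVH by (intro finite_cartesian_product finite_UnI finite_imageI)
  have edge_ne: "p \<noteq> q" if "{p,q} \<in> ?PE" for p q
  proof -
    from that[unfolded PE_iff] have
      "(fst p = fst q \<and> fst p \<in> Inl ` VG \<and> {snd p, snd q} \<in> EH) \<or>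
      (snd p = snd q \<and> {fst p, fst q} \<in> R_edges VG EG)" by blast
    then show ?thesis
    proof
      assume "fst p = fst q \<and> fst p \<in> Inl ` VG \<and> {snd p, snd q} \<in> EH"
      then have "snd p \<noteq> snd q" using sg_edge[OF sgH] by blast
      then show ?thesis by blast
    next
      assume "snd p = snd q \<and> {fst p, fst q} \<in> R_edges VG EG"
      then show ?thesis unfolding R_edges_iff using sg_edge[OF sgG] by (auto; metis insert_absorb2)
    qed
  qed
  have sgP: "simple_graph ?PV ?PE"
    unfolding simple_graph_def
  proof (intro conjI ballI)
    show "finite ?PV" by (rule finPV)
  next
    fix e assume e: "e \<in> ?PE"
    then obtain p q where "e = {p,q}" unfolding plusR_edges_def by blast
    moreover have "{p,q} \<in> ?PE" using e \<open>e = {p,q}\<close> by simp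
    moreover then have "p \<in> ?PV" "q \<in> ?PV" by (simp_all only: PE_iff)
    ultimately show "\<exists>x y. e = {x, y} \<and> x \<noteq> y \<and> x \<in> ?PV \<and> y \<in> ?PV"
      using edge_ne by blast
  qed
  define r where "r p = (case fst p of Inl a \<Rightarrow> (1::nat, rG a, rH (snd p)) | Inr e \<Rightarrow> (0, 0, 0))"
    for p :: "('a + 'a set) \<times> 'b"
  show ?thesis
  proof (rule AT_rank[OF sgP, of r])
    fix p q assume pq: "{p,q} \<in> ?PE"
    then have "(fst p = fst q \<and> fst p \<in> Inl ` VG \<and> {snd p, snd q} \<in> EH) \<or>
      (snd p = snd q \<and> {fst p, fst q} \<in> R_edges VG EG)" using PE_iff by blast
    then show "r p \<noteq> r q"
    proof
      assume a: "fst p = fst q \<and> fst p \<in> Inl ` VG \<and> {snd p, snd q} \<in> EH"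
      then have "snd p \<in> VH \<and> snd q \<in> VH \<and> snd p \<noteq> snd q" using sg_edge[OF sgH] by blast
      then have "rH (snd p) \<noteq> rH (snd q)" using inj_on_eq_iff[OF injH] by blast
      moreover obtain z where "fst p = Inl z" "fst q = Inl z" using a by (metis imageE)
      ultimately show ?thesis unfolding r_def by simp
    next
      assume a: "snd p = snd q \<and> {fst p, fst q} \<in> R_edges VG EG"
      then consider (ll) a b where "fst p = Inl a" "fst q = Inl b" "{a,b} \<in> EG"
        | (x) e a where "(fst p = Inr e \<and> fst q = Inl a) \<or> (fst p = Inl a \<and> fst q = Inr e)"
        unfolding R_edges_iff by blast
      then show ?thesis
      proof cases
        case ll
        then have "a \<in> VG \<and> b \<in> VG \<and> a \<noteq> b" using sg_edge[OF sgG] by blast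
        then have "rG a \<noteq> rG b" using inj_on_eq_iff[OF injG] by blast
        then show ?thesis using ll unfolding r_def by auto
      next
        case x then show ?thesis unfolding r_def by auto
      qed
    qed
  next
    fix v assume vP: "v \<in> ?PV"
    obtain x h where v: "v = (x,h)" by fastforce
    have hV: "h \<in> VH" using vP v unfolding plusR_verts_def by auto
    show "card {u. {v,u} \<in> ?PE \<and> r v < r u} \<le> k + l"
    proof (cases x)
      case (Inl a)
      have aV: "a \<in> VG" using vP v Inl unfolding plusR_verts_def R_verts_def by auto
      let ?A = "(\<lambda>h'. (Inl a :: 'a + 'a set, h')) ` {h'. {h,h'} \<in> EH \<and> rH h < rH h'}"
      let ?B = "(\<lambda>b. (Inl b :: 'a + 'a set, h)) ` {b. {a,b} \<in> EG \<and> rG a < rG b}"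
      have sub: "{u. {v,u} \<in> ?PE \<and> r v < r u} \<subseteq> ?A \<union> ?B"
      proof
        fix u assume u: "u \<in> {u. {v,u} \<in> ?PE \<and> r v < r u}"
        obtain y h' where uu: "u = (y,h')" by fastforce
        have e: "(x = y \<and> x \<in> Inl ` VG \<and> {h, h'} \<in> EH) \<or> (h = h' \<and> {x, y} \<in> R_edges VG EG)"
        proof -
          have "{(x,h),(y,h')} \<in> ?PE" using u uu v by simp
          then show ?thesis unfolding PE_iff by simp
        qed
        have lt: "r (x,h) < r (y,h')" using u uu v by simp
        show "u \<in> ?A \<union> ?B"
        proof (cases y)
          case (Inr e')
          then show ?thesis using lt Inl unfolding r_def by auto
        next
          case (Inl b)
          from e show ?thesis
          proof
            assume "x = y \<and> x \<in> Inl ` VG \<and> {h, h'} \<in> EH"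
            then show ?thesis using lt Inl \<open>x = Inl a\<close> uu unfolding r_def by auto
          next
            assume "h = h' \<and> {x, y} \<in> R_edges VG EG"
            then have "h = h'" "{a,b} \<in> EG" using Inl \<open>x = Inl a\<close> unfolding R_edges_iff by auto
            then show ?thesis using lt Inl \<open>x = Inl a\<close> uu unfolding r_def by auto
          qed
        qed
      qed
      have fA: "finite {h'. {h,h'} \<in> EH \<and> rH h < rH h'}"
        by (rule finite_subset[OF _ finVH]) (use sg_edge[OF sgH] in blast)
      have fB: "finite {b. {a,b} \<in> EG \<and> rG a < rG b}"
        by (rule finite_subset[OF _ finVG]) (use sg_edge[OF sgG] in blast)
      have "card {u. {v,u} \<in> ?PE \<and> r v < r u} \<le> card (?A \<union> ?B)"
        using sub fA fB by (meson card_mono finite_UnI finite_imageI)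
      also have "\<dots> \<le> card ?A + card ?B" by (rule card_Un_le)
      also have "\<dots> \<le> l + k"
      proof -
        have "card ?A \<le> l" using card_image_le[OF fA, of "\<lambda>h'. (Inl a :: 'a + 'a set, h')"] cH hV by (meson le_trans)
        moreover have "card ?B \<le> k" using card_image_le[OF fB, of "\<lambda>b. (Inl b :: 'a + 'a set, h)"] cG aV by (meson le_trans)
        ultimately show ?thesis by simp
      qed
      finally show ?thesis by simp
    next
      case (Inr e)
      have eE: "e \<in> EG" using vP v Inr unfolding plusR_verts_def R_verts_def by auto
      obtain a b where ab: "e = {a,b}" using sgG eE unfolding simple_graph_def by blast
      have sub: "{u. {v,u} \<in> ?PE \<and> r v < r u} \<subseteq> (\<lambda>y. (Inl y :: 'a + 'a set, h)) ` e"
      proof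
        fix u assume u: "u \<in> {u. {v,u} \<in> ?PE \<and> r v < r u}"
        obtain y h' where uu: "u = (y,h')" by fastforce
        have e: "(x = y \<and> x \<in> Inl ` VG \<and> {h, h'} \<in> EH) \<or> (h = h' \<and> {x, y} \<in> R_edges VG EG)"
        proof -
          have "{(x,h),(y,h')} \<in> ?PE" using u uu v by simp
          then show ?thesis unfolding PE_iff by simp
        qed
        then have "h = h' \<and> {x, y} \<in> R_edges VG EG" using Inr by auto
        then show "u \<in> (\<lambda>y. (Inl y :: 'a + 'a set, h)) ` e" using Inr uu unfolding R_edges_iff by auto
      qed
      have "card {u. {v,u} \<in> ?PE \<and> r v < r u} \<le> card ((\<lambda>y. (Inl y :: 'a + 'a set, h)) ` e)"
        using sub ab by (intro card_mono) auto
      also have "\<dots> \<le> card e" using ab by (intro card_image_le) auto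
      also have "\<dots> \<le> 2" using ab by (simp add: card_insert_if)
      finally show ?thesis using assms(1,2) by simp
    qed
  qed
qed

end
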